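(* Let $1<p<\infty$, $p'=\frac p{p-1}$, and $\omega\in\widehat{\mathcal{D}}$. Then $(\mathrm{HL}^\omega_p)^\star\simeq\mathrm{HL}^\omega_{p'}$ via the pairing $$\langle f,g\rangle_{A^2_\omega}=\lim_{r\to1^-}\sum_{n=0}^\infty\widehat f(n)\overline{\widehat g(n)}\,\omega_{2n+1}r^n,$$ with equivalence of norms: each $g\in\mathrm{HL}^\omega_{p'}$ induces a bounded linear functional $f\mapsto\langle f,g\rangle_{A^2_\omega}$ on $\mathrm{HL}^\omega_p$ of norm $\asymp\|g\|_{\mathrm{HL}^\omega_{p'}}$, and every bounded linear functional on $\mathrm{HL}^\omega_p$ arises in this way from a unique $g\in\mathrm{HL}^\omega_{p'}$.
   Context: A radial weight is a non-negative $\omega\in L^1([0,1))$ with $\widehat\omega(r)=\int_r^1\omega(s)\,ds>0$ for all $0\le r<1$. $\omega\in\widehat{\mathcal{D}}$ means there is $C\ge1$ with $\widehat\omega(r)\le C\widehat\omega(\frac{1+r}{2})$ for all $0\le r<1$. Moments: $\omega_x=\int_0^1 r^x\omega(r)\,dr$. For $0<q<\infty$, $\mathrm{HL}^\omega_q$ consists of analytic $f(z)=\sum_{n\ge0}\widehat f(n)z^n$ on the unit disc with $\|f\|^q_{\mathrm{HL}^\omega_q}=\sum_{n=0}^\infty|\widehat f(n)|^q(n+1)^{q-2}\omega_{nq+1}<\infty$. *)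

theory Defs
  imports "HOL-Complex_Analysis.Complex_Analysis"
begin

definition omega_hat :: "(real \<Rightarrow> real) \<Rightarrow> real \<Rightarrow> real" where
  "omega_hat \<omega> r = integral {r..<1} \<omega>"

definition radial_weight :: "(real \<Rightarrow> real) \<Rightarrow> bool" where
  "radial_weight \<omega> \<longleftrightarrow>
     (\<forall>s\<in>{0..<1}. 0 \<le> \<omega> s) \<and>
     \<omega> absolutely_integrable_on {0..<1} \<and>
     (\<forall>r\<in>{0..<1}. omega_hat \<omega> r > 0)"

definition Dhat :: "(real \<Rightarrow> real) \<Rightarrow> bool" where
  "Dhat \<omega> \<longleftrightarrow> radial_weight \<omega> \<and>
     (\<exists>C\<ge>1. \<forall>r\<in>{0..<1}. omega_hat \<omega> r \<le> C * omega_hat \<omega> ((1 + r) / 2))"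

definition moment :: "(real \<Rightarrow> real) \<Rightarrow> real \<Rightarrow> real" where
  "moment \<omega> x = integral {0..<1} (\<lambda>s. s powr x * \<omega> s)"

definition tcoeff :: "(complex \<Rightarrow> complex) \<Rightarrow> nat \<Rightarrow> complex" where
  "tcoeff f n = (deriv ^^ n) f 0 / of_nat (fact n)"

definition HL_sum :: "(real \<Rightarrow> real) \<Rightarrow> real \<Rightarrow> (complex \<Rightarrow> complex) \<Rightarrow> nat \<Rightarrow> real" where
  "HL_sum \<omega> q f n = norm (tcoeff f n) powr q * (real n + 1) powr (q - 2) * moment \<omega> (real n * q + 1)"

definition in_HL :: "(real \<Rightarrow> real) \<Rightarrow> real \<Rightarrow> (complex \<Rightarrow> complex) \<Rightarrow> bool" where
  "in_HL \<omega> q f \<longleftrightarrow> f holomorphic_on ball 0 1 \<and> summable (HL_sum \<omega> q f)"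

definition HL_norm :: "(real \<Rightarrow> real) \<Rightarrow> real \<Rightarrow> (complex \<Rightarrow> complex) \<Rightarrow> real" where
  "HL_norm \<omega> q f = (\<Sum>n. HL_sum \<omega> q f n) powr (1 / q)"

definition pair_r :: "(real \<Rightarrow> real) \<Rightarrow> (complex \<Rightarrow> complex) \<Rightarrow> (complex \<Rightarrow> complex) \<Rightarrow> real \<Rightarrow> complex" where
  "pair_r \<omega> f g r = (\<Sum>n. tcoeff f n * cnj (tcoeff g n) * of_real (moment \<omega> (2 * real n + 1)) * of_real r ^ n)"

definition pairing :: "(real \<Rightarrow> real) \<Rightarrow> (complex \<Rightarrow> complex) \<Rightarrow> (complex \<Rightarrow> complex) \<Rightarrow> complex" where
  "pairing \<omega> f g = Lim (at_left 1) (pair_r \<omega> f g)"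

end

theory Submission
  imports Defs
begin

context fixes \<omega> :: "real \<Rightarrow> real" assumes rw: "radial_weight \<omega>"
begin

lemma om_nonneg: "s \<in> {0..<1} \<Longrightarrow> 0 \<le> \<omega> s"
  using rw unfolding radial_weight_def by auto

lemma om_abs: "\<omega> absolutely_integrable_on {0..<1}"
  using rw unfolding radial_weight_def by auto

lemma om_abs_sub: assumes "0 \<le> t" shows "\<omega> absolutely_integrable_on {t..<1}"
  by (rule set_integrable_subset[OF om_abs]) (use assms in auto)

lemma om_int_sub: assumes "0 \<le> t" shows "\<omega> integrable_on {t..<1}"
  using om_abs_sub[OF assms] set_lebesgue_integral_eq_integral(1) by blast

lemma Fpos: "r \<in> {0..<1} \<Longrightarrow> omega_hat \<omega> r > 0"
  using rw unfolding radial_weight_def by auto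

lemma pw_abs: assumes "x \<ge> 1" and "0 \<le> t" shows "(\<lambda>s. s powr x * \<omega> s) absolutely_integrable_on {t..<1}"
proof (rule absolutely_integrable_bounded_measurable_product_real)
  show "(\<lambda>s. s powr x) \<in> borel_measurable (lebesgue_on {t..<1})"
    by (rule continuous_imp_measurable_on_sets_lebesgue)
       (use assms in \<open>auto intro!: continuous_on_powr'[OF continuous_on_id continuous_on_const]\<close>)
  show "bounded ((\<lambda>s. s powr x) ` {t..<1})"
  proof (rule boundedI[of _ 1])
    fix y assume "y \<in> (\<lambda>s. s powr x) ` {t..<1}"
    then obtain s where s: "s \<in> {t..<1}" "y = s powr x" by auto
    have "s powr x \<le> 1" using s assms by (intro powr_le1) auto
    then show "norm y \<le> 1" using s by simp
  qed
qed (use om_abs_sub assms in auto)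

lemma pw_int: assumes "x \<ge> 1" and "0 \<le> t" shows "(\<lambda>s. s powr x * \<omega> s) integrable_on {t..<1}"
  using pw_abs[OF assms] set_lebesgue_integral_eq_integral(1) by blast

lemma mom_mono: assumes "1 \<le> x" "x \<le> y" shows "moment \<omega> y \<le> moment \<omega> x"
  unfolding moment_def
proof (rule integral_le[OF pw_int pw_int])
  fix s assume s: "s \<in> {0..<1::real}"
  then show "s powr y * \<omega> s \<le> s powr x * \<omega> s"
    using assms om_nonneg[OF s] by (intro mult_right_mono powr_mono') auto
qed (use assms in auto)

lemma mom_lb: assumes "1 \<le> x" "0 \<le> t" "t < 1"
  shows "t powr x * omega_hat \<omega> t \<le> moment \<omega> x"
proof -
  have "t powr x * omega_hat \<omega> t = integral {t..<1} (\<lambda>s. t powr x * \<omega> s)"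
    unfolding omega_hat_def by simp
  also have "\<dots> \<le> integral {t..<1} (\<lambda>s. s powr x * \<omega> s)"
  proof (rule integral_le)
    show "(\<lambda>s. t powr x * \<omega> s) integrable_on {t..<1}"
      using integrable_cmul[OF om_int_sub[OF assms(2)], of "t powr x"] by simp
    show "(\<lambda>s. s powr x * \<omega> s) integrable_on {t..<1}" using pw_int assms by auto
    fix s assume s: "s \<in> {t..<1}"
    then have "0 \<le> \<omega> s" using om_nonneg assms by auto
    then show "t powr x * \<omega> s \<le> s powr x * \<omega> s"
      using s assms by (intro mult_right_mono powr_mono2) auto
  qed
  also have "\<dots> \<le> moment \<omega> x" unfolding moment_def
  proof (rule integral_subset_le)
    show "(\<lambda>s. s powr x * \<omega> s) integrable_on {t..<1}" using pw_int assms by auto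
    show "(\<lambda>s. s powr x * \<omega> s) integrable_on {0..<1}" using pw_int assms by auto
  qed (use assms om_nonneg in auto)
  finally show ?thesis .
qed

lemma mom_pos: assumes "1 \<le> x" shows "moment \<omega> x > 0"
proof -
  have "0 < (1/2) powr x * omega_hat \<omega> (1/2)" using Fpos[of "1/2"] by simp
  also have "\<dots> \<le> moment \<omega> x" using mom_lb[of x "1/2"] assms by simp
  finally show ?thesis .
qed

end

definition tt :: "nat \<Rightarrow> real" where "tt j = 1 - (1/2) ^ j"

lemma tt_ge0: "0 \<le> tt j" unfolding tt_def by (simp add: power_le_one)
lemma tt_lt1: "tt j < 1" unfolding tt_def by simp
lemma tt_Suc: "tt (Suc j) = (1 + tt j) / 2" unfolding tt_def by simp
lemma tt_mono: "j \<le> k \<Longrightarrow> tt j \<le> tt k" unfolding tt_def by (simp add: power_decreasing)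
lemma tt_0: "tt 0 = 0" unfolding tt_def by simp

lemma find_j: "0 \<le> s \<Longrightarrow> s < tt N \<Longrightarrow> \<exists>j<N. tt j \<le> s \<and> s < tt (Suc j)"
proof (induction N)
  case 0 then show ?case by (simp add: tt_0)
next
  case (Suc N)
  show ?case
  proof (cases "s < tt N")
    case True then show ?thesis using Suc by (metis less_SucI)
  next
    case False then show ?thesis using Suc.prems by (intro exI[of _ N]) auto
  qed
qed

context fixes \<omega> :: "real \<Rightarrow> real" assumes rw: "radial_weight \<omega>"
begin

lemma majorant_bound:
  assumes x: "1 \<le> x"
  shows "moment \<omega> x \<le> (\<Sum>j<N. tt (Suc j) powr x * omega_hat \<omega> (tt j)) + omega_hat \<omega> (tt N)"
proof -
  define h where "h s = (\<Sum>j<N. tt (Suc j) powr x * (if s \<in> {tt j..} then \<omega> s else 0))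
                   + (if s \<in> {tt N..} then \<omega> s else 0)" for s
  have ri: "(\<lambda>s. if s \<in> {t..} then \<omega> s else 0) integrable_on {0..<1}"
     and rv: "integral {0..<1} (\<lambda>s. if s \<in> {t..} then \<omega> s else 0) = omega_hat \<omega> t"
    if "0 \<le> t" for t
  proof -
    have e: "{t..} \<inter> {0..<1} = {t..<1::real}" using that by auto
    show "(\<lambda>s. if s \<in> {t..} then \<omega> s else 0) integrable_on {0..<1}"
      unfolding integrable_restrict_Int e using om_int_sub[OF rw that] .
    show "integral {0..<1} (\<lambda>s. if s \<in> {t..} then \<omega> s else 0) = omega_hat \<omega> t"
      unfolding integral_restrict_Int e omega_hat_def ..
  qed
  have ci: "(\<lambda>s. tt (Suc j) powr x * (if s \<in> {tt j..} then \<omega> s else 0)) integrable_on {0..<1}" for j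
    using integrable_cmul[OF ri[OF tt_ge0[of j]], of "tt (Suc j) powr x"] by (simp del: atLeast_iff)
  have hi1: "(\<lambda>s. \<Sum>j<N. tt (Suc j) powr x * (if s \<in> {tt j..} then \<omega> s else 0)) integrable_on {0..<1}"
    by (intro integrable_sum ci) auto
  have hi2: "(\<lambda>s. if s \<in> {tt N..} then \<omega> s else 0) integrable_on {0..<1}"
    by (rule ri[OF tt_ge0])
  have "moment \<omega> x \<le> integral {0..<1} h"
    unfolding moment_def
  proof (rule integral_le)
    show "(\<lambda>s. s powr x * \<omega> s) integrable_on {0..<1}" using pw_int[OF rw x] by simp
    show "h integrable_on {0..<1}" unfolding h_def by (rule integrable_add[OF hi1 hi2])
    fix s :: real assume s: "s \<in> {0..<1}"
    have w: "0 \<le> \<omega> s" using om_nonneg[OF rw s] .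
    have nn: "\<And>j. 0 \<le> tt (Suc j) powr x * (if s \<in> {tt j..} then \<omega> s else 0)"
      using w by auto
    show "s powr x * \<omega> s \<le> h s"
    proof (cases "tt N \<le> s")
      case True
      have "s powr x \<le> 1" using s x by (intro powr_le1) auto
      then have "s powr x * \<omega> s \<le> \<omega> s" using w by (simp add: mult_left_le_one_le)
      also have "\<dots> \<le> h s" unfolding h_def using True sum_nonneg[of "{..<N}", OF nn] by simp
      finally show ?thesis .
    next
      case False
      then obtain j where j: "j < N" "tt j \<le> s" "s < tt (Suc j)"
        using find_j[of s N] s by auto
      have "s powr x * \<omega> s \<le> tt (Suc j) powr x * \<omega> s"
        using j s x w by (intro mult_right_mono powr_mono2) auto
      also have "\<dots> = tt (Suc j) powr x * (if s \<in> {tt j..} then \<omega> s else 0)" using j by simp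
      also have "\<dots> \<le> (\<Sum>j<N. tt (Suc j) powr x * (if s \<in> {tt j..} then \<omega> s else 0))"
        using j nn by (intro member_le_sum) auto
      also have "\<dots> \<le> h s" unfolding h_def using w by auto
      finally show ?thesis .
    qed
  qed
  also have "integral {0..<1} h = (\<Sum>j<N. tt (Suc j) powr x * omega_hat \<omega> (tt j)) + omega_hat \<omega> (tt N)"
    unfolding h_def
    apply (subst integral_add[OF hi1 hi2])
    apply (subst integral_sum[OF _ ci])
    by (auto simp del: atLeast_iff simp: rv tt_ge0)
  finally show ?thesis .
qed

end

lemma exp_pow_summable:
  fixes C :: real assumes "C \<ge> 1"
  shows "summable (\<lambda>i. C ^ i * exp (- (2 ^ i) / 4))"
proof -
  obtain i0 :: nat where i0: "4 * ln (2 * C) \<le> real i0" using real_arch_simple by blast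
  show ?thesis
  proof (rule summable_ratio_test[of "1/2" i0])
    fix n assume n: "i0 \<le> n"
    have "real n \<le> 2 ^ n"
    proof (induction n)
      case (Suc n)
      have "1 \<le> (2::real) ^ n" by simp
      then show ?case using Suc.IH by (simp only: of_nat_Suc power_Suc)
    qed simp
    then have "4 * ln (2*C) \<le> 2 ^ n" using n i0 by linarith
    then have "ln (2*C) \<le> 2 ^ n / 4" by simp
    then have "2 * C \<le> exp (2 ^ n / 4)" using assms by (metis exp_le_cancel_iff exp_ln_iff less_le_trans linorder_not_le mult_pos_pos zero_less_numeral zero_less_one)
    then have c: "C * exp (- (2 ^ n) / 4) \<le> 1/2"
      by (simp add: exp_minus field_simps)
    have "C ^ Suc n * exp (- (2 ^ Suc n) / 4) = (C * exp (- (2 ^ n) / 4)) * (C ^ n * exp (- (2 ^ n) / 4))"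
    proof -
      have e: "exp (- (2 ^ Suc n) / 4) = exp (- (2 ^ n) / 4) * exp (- ((2::real) ^ n) / 4)"
        unfolding mult_exp_exp by (rule arg_cong[where f=exp]) simp
      show ?thesis unfolding e by (simp add: field_simps)
    qed
    also have "\<dots> \<le> 1/2 * (C ^ n * exp (- (2 ^ n) / 4))"
      using c assms by (intro mult_right_mono) auto
    finally show "norm (C ^ Suc n * exp (- (2 ^ Suc n) / 4)) \<le> 1/2 * norm (C ^ n * exp (- (2 ^ n) / 4))"
      using assms by simp
  qed simp
qed


lemma exN_aux: "1 \<le> x \<Longrightarrow> x \<le> 2 ^ k \<Longrightarrow> \<exists>N\<ge>1. (2::real) ^ (N - 1) \<le> x \<and> x \<le> 2 ^ N"
proof (induction k)
  case 0 then show ?case by (intro exI[of _ 1]) auto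
next
  case (Suc k)
  show ?case
  proof (cases "x \<le> 2 ^ k")
    case True then show ?thesis using Suc by blast
  next
    case False then show ?thesis using Suc.prems by (intro exI[of _ "Suc k"]) auto
  qed
qed

lemma exN: "1 \<le> x \<Longrightarrow> \<exists>N\<ge>1. (2::real) ^ (N - 1) \<le> x \<and> x \<le> 2 ^ N"
proof -
  assume x: "1 \<le> x"
  obtain k where "x < (2::real) ^ k" using real_arch_pow[of 2 x] by auto
  then show ?thesis using exN_aux[OF x, of k] by auto
qed

lemma pw_aux: "(2::real)^(j+k) * (1/2)^(Suc j) = 2^(Suc k)/4"
  by (simp add: power_add field_simps)

lemma tt_powr_upper: assumes "j < N" "(2::real) ^ (N - 1) \<le> x"
  shows "tt (Suc j) powr x \<le> exp (- (2 ^ (N - j)) / 4)"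
proof -
  define u :: real where "u = (1/2) ^ (Suc j)"
  have "(1/2::real) ^ Suc j \<le> (1/2) ^ 1" by (rule power_decreasing) auto
  then have u: "0 < u" "u < 1" unfolding u_def by auto
  have "0 \<le> (2::real) ^ (N - 1)" by simp
  then have x0: "0 \<le> x" using assms(2) by linarith
  have "tt (Suc j) = 1 - u" unfolding tt_def u_def ..
  have "tt (Suc j) powr x = exp (x * ln (1 - u))"
    using u unfolding \<open>tt (Suc j) = 1 - u\<close> by (simp add: powr_def)
  also have "\<dots> \<le> exp (- (x * u))"
  proof -
    have "ln (1 - u) \<le> - u" using ln_le_minus_one[of "1 - u"] u by simp
    from mult_left_mono[OF this x0] show ?thesis by simp
  qed
  also have "\<dots> \<le> exp (- (2 ^ (N - j)) / 4)"
  proof -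
    define k where "k = N - 1 - j"
    have k: "N - 1 = j + k" "N - j = Suc k" using assms(1) unfolding k_def by auto
    have "2 ^ (N - j) / 4 = (2::real)^(N - 1) * u" unfolding u_def k pw_aux ..
    also have "\<dots> \<le> x * u" using assms(2) u by (intro mult_right_mono) auto
    finally show ?thesis by simp
  qed
  finally show ?thesis .
qed

lemma tt_powr_lower: assumes "1 \<le> N" "0 \<le> y" "y \<le> 2 ^ Suc N"
  shows "exp (-4) \<le> tt N powr y"
proof -
  have "(1/2::real) ^ N \<le> (1/2) ^ 1" using assms(1) by (intro power_decreasing) auto
  then have h: "1/2 \<le> tt N" unfolding tt_def by simp
  have t1: "tt N \<le> 1" using tt_lt1[of N] by simp
  have "tt N powr (2 ^ Suc N) \<le> tt N powr y" using assms h t1 by (intro powr_mono') auto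
  moreover have "exp (-4) \<le> tt N powr (2 ^ Suc N)"
  proof -
    have l: "1 - 1 / tt N \<le> ln (tt N)"
      using ln_le_minus_one[of "1 / tt N"] h by (simp add: ln_div)
    have "1 - 1 / tt N = - ((1/2)^N / tt N)" using h unfolding tt_def by (simp add: field_simps)
    also have "\<dots> \<ge> - (2 * (1/2)^N)" using h by (simp add: field_simps)
    finally have "- (2 * (1/2)^N) \<le> ln (tt N)" using l by linarith
    then have "2 ^ Suc N * (- (2 * (1/2)^N)) \<le> 2 ^ Suc N * ln (tt N)"
      by (intro mult_left_mono) auto
    moreover have "(2::real) ^ Suc N * (- (2 * (1/2)^N)) = -4"
      by (simp add: field_simps power_one_over)
    ultimately have "-4 \<le> 2 ^ Suc N * ln (tt N)" by simp
    then show ?thesis using h by (simp add: powr_def)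
  qed
  ultimately show ?thesis by simp
qed

lemma mom_dbl:
  assumes D: "Dhat \<omega>"
  shows "\<exists>K>0. \<forall>x\<ge>1. moment \<omega> x \<le> K * moment \<omega> (2 * x)"
proof -
  have rw: "radial_weight \<omega>" using D unfolding Dhat_def by simp
  obtain C where C: "C \<ge> 1" "\<And>r. r \<in> {0..<1} \<Longrightarrow> omega_hat \<omega> r \<le> C * omega_hat \<omega> ((1 + r) / 2)"
    using D unfolding Dhat_def by blast
  have Fit: "omega_hat \<omega> (tt j) \<le> C ^ d * omega_hat \<omega> (tt (j + d))" for j d
  proof (induction d)
    case 0 then show ?case by simp
  next
    case (Suc d)
    have "omega_hat \<omega> (tt (j + d)) \<le> C * omega_hat \<omega> (tt (Suc (j + d)))"
      using C(2)[of "tt (j+d)"] tt_ge0 tt_lt1 by (simp add: tt_Suc)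
    then have "C ^ d * omega_hat \<omega> (tt (j + d)) \<le> C ^ d * (C * omega_hat \<omega> (tt (Suc (j + d))))"
      using C(1) by (intro mult_left_mono) auto
    then show ?case using Suc by (simp add: ac_simps)
  qed
  define a where "a i = C ^ i * exp (- (2 ^ i) / 4)" for i :: nat
  have sa: "summable a" unfolding a_def using exp_pow_summable[OF C(1)] .
  have a0: "0 \<le> a i" for i unfolding a_def using C(1) by simp
  define A where "A = suminf a"
  have A0: "0 \<le> A" unfolding A_def using sa a0 by (simp add: suminf_nonneg)
  show ?thesis
  proof (intro exI[of _ "(1 + A) * exp 4"] conjI allI impI)
    show "0 < (1 + A) * exp 4" using A0 by simp
    fix x :: real assume x: "1 \<le> x"
    obtain N where N: "1 \<le> N" "2 ^ (N - 1) \<le> x" "x \<le> 2 ^ N" using exN[OF x] by auto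
    define FN where "FN = omega_hat \<omega> (tt N)"
    have FN0: "0 < FN" unfolding FN_def using Fpos[OF rw] tt_ge0 tt_lt1 by auto
    have "moment \<omega> x \<le> (\<Sum>j<N. tt (Suc j) powr x * omega_hat \<omega> (tt j)) + FN"
      unfolding FN_def by (rule majorant_bound[OF rw x])
    also have "(\<Sum>j<N. tt (Suc j) powr x * omega_hat \<omega> (tt j)) \<le> (\<Sum>j<N. a (N - j) * FN)"
    proof (rule sum_mono)
      fix j assume j: "j \<in> {..<N}"
      have Fj: "omega_hat \<omega> (tt j) \<le> C ^ (N - j) * FN"
        using Fit[of j "N - j"] j unfolding FN_def by simp
      have "tt (Suc j) powr x * omega_hat \<omega> (tt j) \<le> exp (- (2 ^ (N - j)) / 4) * (C ^ (N - j) * FN)"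
        using tt_powr_upper[of j N x] j N Fj Fpos[OF rw, of "tt j"] tt_ge0 tt_lt1
        by (intro mult_mono) auto
      then show "tt (Suc j) powr x * omega_hat \<omega> (tt j) \<le> a (N - j) * FN"
        unfolding a_def by (simp add: ac_simps)
    qed
    also have "(\<Sum>j<N. a (N - j) * FN) = (\<Sum>j<N. a (N - j)) * FN" by (simp add: sum_distrib_right)
    also have "(\<Sum>j<N. a (N - j)) \<le> A"
    proof -
      have inj: "inj_on (\<lambda>j. N - j) {..<N}" by (auto simp: inj_on_def)
      have "(\<Sum>j<N. a (N - j)) = sum a ((\<lambda>j. N - j) ` {..<N})"
        using sum.reindex[OF inj, of a] by simp
      also have "\<dots> \<le> A" unfolding A_def by (rule sum_le_suminf[OF sa]) (auto simp: a0)
      finally show ?thesis .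
    qed
    then have "(\<Sum>j<N. a (N - j)) * FN \<le> A * FN" using FN0 by (intro mult_right_mono) auto
    finally have up: "moment \<omega> x \<le> (1 + A) * FN" by (simp add: algebra_simps)
    have "exp (-4) * FN \<le> tt N powr (2 * x) * FN"
      using tt_powr_lower[of N "2 * x"] N x FN0 by (intro mult_right_mono) auto
    also have "\<dots> \<le> moment \<omega> (2 * x)" unfolding FN_def
      using mom_lb[OF rw, of "2 * x" "tt N"] x tt_ge0 tt_lt1 by simp
    finally have "FN \<le> exp 4 * moment \<omega> (2 * x)" by (simp add: exp_minus field_simps)
    then have "(1 + A) * FN \<le> (1 + A) * (exp 4 * moment \<omega> (2 * x))" using A0 by (intro mult_left_mono) auto
    with up show "moment \<omega> x \<le> (1 + A) * exp 4 * moment \<omega> (2 * x)" by (simp add: ac_simps)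
  qed
qed


lemma mom_iter:
  assumes D: "Dhat \<omega>" and K: "K > 0" "\<forall>x\<ge>1. moment \<omega> x \<le> K * moment \<omega> (2 * x)"
  shows "1 \<le> x \<Longrightarrow> moment \<omega> x \<le> K ^ k * moment \<omega> (2 ^ k * x)"
proof (induction k arbitrary: x)
  case 0 then show ?case by simp
next
  case (Suc k)
  have "moment \<omega> x \<le> K * moment \<omega> (2 * x)" using K Suc.prems by auto
  also have "moment \<omega> (2 * x) \<le> K ^ k * moment \<omega> (2 ^ k * (2 * x))" using Suc.IH[of "2*x"] Suc.prems by auto
  finally show ?case using K by (simp add: mult_left_mono ac_simps)
qed

lemma mom_comp:
  assumes D: "Dhat \<omega>" and l: "0 < l"
  shows "\<exists>K>0. \<forall>n::nat. moment \<omega> (real n * l + 1) \<le> K * moment \<omega> (2 * real n + 1)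
                       \<and> moment \<omega> (2 * real n + 1) \<le> K * moment \<omega> (real n * l + 1)"
proof -
  have rw: "radial_weight \<omega>" using D unfolding Dhat_def by simp
  obtain K where K: "K > 0" "\<forall>x\<ge>1. moment \<omega> x \<le> K * moment \<omega> (2 * x)"
    using mom_dbl[OF D] by blast
  obtain k :: nat where k: "max (2 / l) (max l 1) < 2 ^ k" using real_arch_pow[of 2] by fastforce
  have gen: "moment \<omega> x \<le> K ^ k * moment \<omega> y" if "1 \<le> x" "1 \<le> y" "y \<le> 2 ^ k * x" for x y
  proof -
    have "moment \<omega> x \<le> K ^ k * moment \<omega> (2 ^ k * x)" by (rule mom_iter[OF D K that(1)])
    also have "moment \<omega> (2 ^ k * x) \<le> moment \<omega> y" using that by (intro mom_mono[OF rw]) auto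
    then have "K ^ k * moment \<omega> (2 ^ k * x) \<le> K ^ k * moment \<omega> y" using K by (intro mult_left_mono) auto
    finally show ?thesis .
  qed
  show ?thesis
  proof (intro exI[of _ "K ^ k"] conjI allI)
    show "0 < K ^ k" using K by simp
    fix n :: nat
    have n0: "0 \<le> real n" by simp
    have kl: "2 \<le> 2 ^ k * l" "l \<le> 2 ^ k" "1 \<le> (2::real) ^ k" using k l by (auto simp: field_simps)
    have "real n * 2 \<le> real n * (2 ^ k * l)" using kl(1) n0 by (intro mult_left_mono) auto
    moreover have "2 ^ k * (real n * l + 1) = real n * (2 ^ k * l) + 2 ^ k" by (simp add: algebra_simps)
    ultimately have "2 * real n + 1 \<le> 2 ^ k * (real n * l + 1)" using kl by linarith
    note i1 = this
    have "real n * l \<le> real n * (2 ^ k)" using kl(2) n0 by (intro mult_left_mono) auto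
    moreover have "real n * (2 ^ k) \<le> real n * (2 ^ k * 2)" using n0 by (intro mult_left_mono) auto
    moreover have "2 ^ k * (2 * real n + 1) = real n * (2 ^ k * 2) + 2 ^ k" by (simp add: algebra_simps)
    ultimately have "real n * l + 1 \<le> 2 ^ k * (2 * real n + 1)" using kl by linarith
    note i2 = this
    show "moment \<omega> (real n * l + 1) \<le> K ^ k * moment \<omega> (2 * real n + 1)"
      using l i1 by (intro gen) auto
    show "moment \<omega> (2 * real n + 1) \<le> K ^ k * moment \<omega> (real n * l + 1)"
      using l i2 by (intro gen) auto
  qed
qed



lemma holder_series:
  fixes x y :: "nat \<Rightarrow> real" and p q :: real
  assumes pq: "p > 1" "q > 1" "1/p + 1/q = 1"
    and x0: "\<And>n. 0 \<le> x n" and y0: "\<And>n. 0 \<le> y n"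
    and sx: "summable (\<lambda>n. x n powr p)" and sy: "summable (\<lambda>n. y n powr q)"
  shows "summable (\<lambda>n. x n * y n) \<and>
         (\<Sum>n. x n * y n) \<le> (\<Sum>n. x n powr p) powr (1/p) * (\<Sum>n. y n powr q) powr (1/q)"
proof -
  define X where "X = (\<Sum>n. x n powr p)"
  define Y where "Y = (\<Sum>n. y n powr q)"
  have X0: "0 \<le> X" unfolding X_def by (rule suminf_nonneg[OF sx]) simp
  have Y0: "0 \<le> Y" unfolding Y_def by (rule suminf_nonneg[OF sy]) simp
  show ?thesis
  proof (cases "X = 0 \<or> Y = 0")
    case True
    then have "\<forall>n. x n * y n = 0"
    proof
      assume "X = 0"
      then have "\<forall>n. x n powr p = 0" using suminf_eq_zero_iff[OF sx] unfolding X_def by simp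
      then show ?thesis by simp
    next
      assume "Y = 0"
      then have "\<forall>n. y n powr q = 0" using suminf_eq_zero_iff[OF sy] unfolding Y_def by simp
      then show ?thesis by simp
    qed
    then have e: "(\<lambda>n. x n * y n) = (\<lambda>n. 0)" by auto
    show ?thesis using X0 Y0 unfolding e X_def[symmetric] Y_def[symmetric] by simp
  next
    case False
    then have Xp: "0 < X" and Yp: "0 < Y" using X0 Y0 by auto
    define u where "u n = x n / X powr (1/p)" for n
    define v where "v n = y n / Y powr (1/q)" for n
    have up: "u n powr p = x n powr p / X" for n
      unfolding u_def using Xp x0[of n] pq by (simp add: powr_divide powr_powr)
    have vq: "v n powr q = y n powr q / Y" for n
      unfolding v_def using Yp y0[of n] pq by (simp add: powr_divide powr_powr)
    have young: "u n * v n \<le> x n powr p / X / p + y n powr q / Y / q" for n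
      using Youngs_inequality[OF pq, of "u n" "v n"] x0[of n] y0[of n] Xp Yp
      unfolding u_def v_def by (simp add: up[unfolded u_def] vq[unfolded v_def])
    have sR: "summable (\<lambda>n. x n powr p / X / p + y n powr q / Y / q)"
      by (intro summable_add summable_divide sx sy)
    have uv0: "0 \<le> u n * v n" for n unfolding u_def v_def using x0 y0 by simp
    have suv: "summable (\<lambda>n. u n * v n)"
      by (rule summable_comparison_test'[OF sR]) (use young uv0 in auto)
    have xy: "x n * y n = (X powr (1/p) * Y powr (1/q)) * (u n * v n)" for n
      unfolding u_def v_def using Xp Yp by simp
    have sxy: "summable (\<lambda>n. x n * y n)" unfolding xy by (intro summable_mult suv)
    have "(\<Sum>n. u n * v n) \<le> (\<Sum>n. x n powr p / X / p + y n powr q / Y / q)"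
      by (rule suminf_le[OF young suv sR])
    also have "\<dots> = X / X / p + Y / Y / q"
      using suminf_add[OF summable_divide[OF summable_divide[OF sx]] summable_divide[OF summable_divide[OF sy]]]
            suminf_divide[OF summable_divide[OF sx]] suminf_divide[OF sx] suminf_divide[OF summable_divide[OF sy]] suminf_divide[OF sy]
      unfolding X_def Y_def by metis
    also have "\<dots> = 1" using Xp Yp pq by simp
    finally have "(\<Sum>n. u n * v n) \<le> 1" .
    then have "(\<Sum>n. x n * y n) \<le> X powr (1/p) * Y powr (1/q)"
      unfolding xy suminf_mult[OF suv] by (simp add: mult_left_le)
    then show ?thesis using sxy unfolding X_def Y_def by simp
  qed
qed

lemma taylor_sums:
  assumes "f holomorphic_on ball 0 1" "z \<in> ball 0 1"
  shows "(\<lambda>n. tcoeff f n * z ^ n) sums f z"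
  using holomorphic_power_series[OF assms] unfolding tcoeff_def by simp

lemma tcoeff_sums:
  assumes "\<And>z. z \<in> ball 0 1 \<Longrightarrow> (\<lambda>n. c n * z ^ n) sums f z"
  shows "tcoeff f n = c n"
proof -
  define F where "F = Abs_fps c"
  have "fps_conv_radius F \<ge> 1"
    unfolding fps_conv_radius_def F_def
  proof (rule conv_radius_geI_ex')
    fix r :: real assume r: "0 < r" "ereal r < 1"
    then show "summable (\<lambda>n. fps_nth (Abs_fps c) n * of_real r ^ n)"
      using assms[of "of_real r"] by (auto simp: sums_iff)
  qed
  then have rad: "fps_conv_radius F > 0" by (rule less_le_trans[rotated]) simp
  have ev: "eventually (\<lambda>z. eval_fps F z = f z) (nhds 0)"
  proof (rule eventually_nhds_in_open[of "ball 0 1", THEN eventually_mono])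
    fix z :: complex assume "z \<in> ball 0 1"
    then show "eval_fps F z = f z" unfolding eval_fps_def F_def using assms sums_unique by fastforce
  qed auto
  have "f has_fps_expansion F" unfolding has_fps_expansion_def using rad ev by blast
  from fps_nth_fps_expansion[OF this, of n] show ?thesis
    unfolding tcoeff_def F_def by simp
qed


lemma abel_lim:
  fixes c :: "nat \<Rightarrow> complex"
  assumes sc: "summable (\<lambda>n. norm (c n))"
  shows "((\<lambda>r. \<Sum>n. c n * of_real r ^ n) \<longlongrightarrow> (\<Sum>n. c n)) (at_left 1)"
proof -
  have ul: "uniform_limit {0..1::real} (\<lambda>N r. \<Sum>i<N. c i * of_real r ^ i) (\<lambda>r. \<Sum>i. c i * of_real r ^ i) sequentially"
  proof (rule Weierstrass_m_test[OF _ sc])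
    fix n and r :: real assume r: "r \<in> {0..1}"
    have "norm (c n * of_real r ^ n) = norm (c n) * r ^ n" using r by (simp add: norm_mult norm_power)
    also have "\<dots> \<le> norm (c n) * 1" using r by (intro mult_left_mono power_le_one) auto
    finally show "norm (c n * of_real r ^ n) \<le> norm (c n)" by simp
  qed
  have "continuous_on {0..1::real} (\<lambda>r. \<Sum>i. c i * of_real r ^ i)"
    by (rule uniform_limit_theorem[OF _ ul]) (auto intro!: always_eventually continuous_intros)
  from continuous_on_Icc_at_leftD[OF this] show ?thesis by simp
qed

lemma series_holo:
  fixes b :: "nat \<Rightarrow> complex"
  assumes sb: "\<And>\<rho>. 0 \<le> \<rho> \<Longrightarrow> \<rho> < 1 \<Longrightarrow> summable (\<lambda>n. norm (b n) * \<rho> ^ n)"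
  shows "(\<lambda>z. \<Sum>n. b n * z ^ n) holomorphic_on ball 0 1"
    and "tcoeff (\<lambda>z. \<Sum>n. b n * z ^ n) n = b n"
proof -
  have sz: "summable (\<lambda>n. b n * z ^ n)" if "z \<in> ball 0 1" for z
  proof (rule summable_norm_cancel)
    have "summable (\<lambda>n. norm (b n) * norm z ^ n)" using that by (intro sb) auto
    then show "summable (\<lambda>n. norm (b n * z ^ n))" by (simp add: norm_mult norm_power)
  qed
  define F where "F = Abs_fps b"
  have "fps_conv_radius F \<ge> 1"
    unfolding fps_conv_radius_def F_def
  proof (rule conv_radius_geI_ex')
    fix r :: real assume r: "0 < r" "ereal r < 1"
    then show "summable (\<lambda>n. fps_nth (Abs_fps b) n * of_real r ^ n)"
      using sz[of "of_real r"] by auto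
  qed
  then have "ball 0 1 \<subseteq> eball 0 (fps_conv_radius F)" by (intro ball_eball_mono) (simp add: one_ereal_def)
  then have "eval_fps F holomorphic_on ball 0 1" by (rule holomorphic_on_eval_fps)
  moreover have "eval_fps F = (\<lambda>z. \<Sum>n. b n * z ^ n)" unfolding F_def eval_fps_def by simp
  ultimately show "(\<lambda>z. \<Sum>n. b n * z ^ n) holomorphic_on ball 0 1" by simp
  show "tcoeff (\<lambda>z. \<Sum>n. b n * z ^ n) n = b n"
    by (rule tcoeff_sums) (use sz summable_sums in blast)
qed

definition P :: "(nat \<Rightarrow> complex) \<Rightarrow> nat \<Rightarrow> complex \<Rightarrow> complex" where
  "P a N = (\<lambda>z. \<Sum>n<N. a n * z ^ n)"

lemma P_sums: "(\<lambda>n. (if n < N then a n else 0) * z ^ n) sums P a N z"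
proof -
  have "(\<lambda>n. (if n < N then a n else 0) * z ^ n) sums (\<Sum>n\<in>{..<N}. (if n < N then a n else 0) * z ^ n)"
    by (rule sums_finite) auto
  then show ?thesis unfolding P_def by simp
qed

lemma P_holo: "P a N holomorphic_on A"
  unfolding P_def by (intro holomorphic_intros)

lemma P_tcoeff: "tcoeff (P a N) n = (if n < N then a n else 0)"
  by (rule tcoeff_sums[OF P_sums])

lemma HL_sum_P: "q > 0 \<Longrightarrow> \<not> n < N \<Longrightarrow> HL_sum \<omega> q (P a N) n = 0"
  unfolding HL_sum_def P_tcoeff by auto

lemma P_in_HL: assumes "q > 0" shows "in_HL \<omega> q (P a N)"
  unfolding in_HL_def
proof
  show "P a N holomorphic_on ball 0 1" by (rule P_holo)
  have "HL_sum \<omega> q (P a N) sums (\<Sum>n\<in>{..<N}. HL_sum \<omega> q (P a N) n)"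
    by (rule sums_finite) (use HL_sum_P[OF assms] in auto)
  then show "summable (HL_sum \<omega> q (P a N))" by (rule sums_summable)
qed

lemma HL_norm_P: assumes "q > 0"
  shows "HL_norm \<omega> q (P a N) = (\<Sum>n<N. norm (a n) powr q * ((real n + 1) powr (q - 2) * moment \<omega> (real n * q + 1))) powr (1/q)"
proof -
  have "(\<Sum>n. HL_sum \<omega> q (P a N) n) = (\<Sum>n<N. HL_sum \<omega> q (P a N) n)"
    by (rule suminf_finite) (use HL_sum_P[OF assms] in \<open>auto simp: not_less\<close>)
  also have "\<dots> = (\<Sum>n<N. norm (a n) powr q * ((real n + 1) powr (q - 2) * moment \<omega> (real n * q + 1)))"
    by (rule sum.cong) (auto simp: HL_sum_def P_tcoeff)
  finally show ?thesis unfolding HL_norm_def by simp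
qed



lemma summable_lin_geom:
  fixes q :: real assumes q: "0 \<le> q" "q < 1"
  shows "summable (\<lambda>n. (real n + 1) * q ^ n)"
proof -
  obtain N0 :: nat where N0: "3 / (1 - q) \<le> real N0" using real_arch_simple by blast
  show ?thesis
  proof (rule summable_ratio_test[of "(1 + q) / 2" N0])
    show "(1 + q) / 2 < 1" using q by simp
    fix n assume n: "N0 \<le> n"
    have "3 \<le> real N0 * (1 - q)" using N0 q by (simp add: field_simps)
    also have "\<dots> \<le> real n * (1 - q)" using n q by (intro mult_right_mono) auto
    finally have "3 \<le> real n * (1 - q)" .
    then have "(real (Suc n) + 1) * q \<le> (1 + q) / 2 * (real n + 1)" using q by (simp add: algebra_simps)
    then have "(real (Suc n) + 1) * q * q ^ n \<le> (1 + q) / 2 * (real n + 1) * q ^ n" using q by (intro mult_right_mono) auto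
    then show "norm ((real (Suc n) + 1) * q ^ Suc n) \<le> (1 + q) / 2 * norm ((real n + 1) * q ^ n)"
      using q by (simp add: ac_simps)
  qed
qed

locale HLloc =
  fixes \<omega> :: "real \<Rightarrow> real" and p p' :: real
  assumes p1: "1 < p" and pp: "p' = p / (p - 1)" and Dh: "Dhat \<omega>"
begin

lemma rw: "radial_weight \<omega>" using Dh unfolding Dhat_def by simp
lemma p'1: "1 < p'" using p1 unfolding pp by (simp add: field_simps)
lemma conj: "1 / p + 1 / p' = 1" using p1 unfolding pp by (simp add: field_simps)
lemma pp1: "(p' - 1) * p = p'" using p1 unfolding pp by (simp add: field_simps)
lemma pp2: "p' * (p - 1) = p" using p1 unfolding pp by (simp add: field_simps)

definition W :: "real \<Rightarrow> nat \<Rightarrow> real" where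
  "W q n = (real n + 1) powr (q - 2) * moment \<omega> (real n * q + 1)"
definition Dm :: "nat \<Rightarrow> real" where "Dm n = moment \<omega> (2 * real n + 1)"

lemma W_pos: "0 \<le> q \<Longrightarrow> 0 < W q n"
  unfolding W_def using mom_pos[OF rw, of "real n * q + 1"] by simp
lemma Dm_pos: "0 < Dm n"
  unfolding Dm_def using mom_pos[OF rw, of "2 * real n + 1"] by simp

lemma HL_sum_W: "HL_sum \<omega> q f n = norm (tcoeff f n) powr q * W q n"
  unfolding HL_sum_def W_def by simp

lemma K_ex: "\<exists>K>0. \<forall>n. moment \<omega> (real n * p + 1) \<le> K * Dm n \<and> Dm n \<le> K * moment \<omega> (real n * p + 1)
                 \<and> moment \<omega> (real n * p' + 1) \<le> K * Dm n \<and> Dm n \<le> K * moment \<omega> (real n * p' + 1)"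
proof -
  obtain Ka where Ka: "Ka > 0" "\<forall>n::nat. moment \<omega> (real n * p + 1) \<le> Ka * Dm n \<and> Dm n \<le> Ka * moment \<omega> (real n * p + 1)"
    using mom_comp[OF Dh, of p] p1 unfolding Dm_def by auto
  obtain Kb where Kb: "Kb > 0" "\<forall>n::nat. moment \<omega> (real n * p' + 1) \<le> Kb * Dm n \<and> Dm n \<le> Kb * moment \<omega> (real n * p' + 1)"
    using mom_comp[OF Dh, of p'] p'1 unfolding Dm_def by auto
  show ?thesis
  proof (intro exI[of _ "max Ka Kb"] conjI allI)
    fix n
    have d: "0 \<le> Dm n" using Dm_pos less_imp_le by blast
    have a: "0 \<le> moment \<omega> (real n * p + 1)" using mom_pos[OF rw, of "real n * p + 1"] p1 by simp
    have b: "0 \<le> moment \<omega> (real n * p' + 1)" using mom_pos[OF rw, of "real n * p' + 1"] p'1 by simp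
    have m1: "Ka * x \<le> max Ka Kb * x" "Kb * x \<le> max Ka Kb * x" if "0 \<le> x" for x
      using that by (auto intro: mult_right_mono)
    show "moment \<omega> (real n * p + 1) \<le> max Ka Kb * Dm n" using Ka m1(1)[OF d] by (meson order_trans)
    show "Dm n \<le> max Ka Kb * moment \<omega> (real n * p + 1)" using Ka m1(1)[OF a] by (meson order_trans)
    show "moment \<omega> (real n * p' + 1) \<le> max Ka Kb * Dm n" using Kb m1(2)[OF d] by (meson order_trans)
    show "Dm n \<le> max Ka Kb * moment \<omega> (real n * p' + 1)" using Kb m1(2)[OF b] by (meson order_trans)
  qed (use Ka in auto)
qed

definition K0 where "K0 = (SOME K. K > 0 \<and> (\<forall>n. moment \<omega> (real n * p + 1) \<le> K * Dm n \<and> Dm n \<le> K * moment \<omega> (real n * p + 1)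
                 \<and> moment \<omega> (real n * p' + 1) \<le> K * Dm n \<and> Dm n \<le> K * moment \<omega> (real n * p' + 1)))"

lemma K0: "K0 > 0" "moment \<omega> (real n * p + 1) \<le> K0 * Dm n" "Dm n \<le> K0 * moment \<omega> (real n * p + 1)"
          "moment \<omega> (real n * p' + 1) \<le> K0 * Dm n" "Dm n \<le> K0 * moment \<omega> (real n * p' + 1)"
  using someI_ex[OF K_ex] unfolding K0_def[symmetric] by auto

lemma W_prod: "W p n powr (1/p) * W p' n powr (1/p') = moment \<omega> (real n * p + 1) powr (1/p) * moment \<omega> (real n * p' + 1) powr (1/p')"
proof -
  define A where "A = moment \<omega> (real n * p + 1)"
  define B where "B = moment \<omega> (real n * p' + 1)"
  have A: "0 < A" unfolding A_def using mom_pos[OF rw, of "real n * p + 1"] p1 by simp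
  have B: "0 < B" unfolding B_def using mom_pos[OF rw, of "real n * p' + 1"] p'1 by simp
  have e: "(p - 2) * (1/p) + (p' - 2) * (1/p') = 0" using conj p1 p'1 by (simp add: field_simps)
  have "W p n powr (1/p) * W p' n powr (1/p') =
        ((real n + 1) powr ((p - 2) * (1/p)) * (real n + 1) powr ((p' - 2) * (1/p'))) * (A powr (1/p) * B powr (1/p'))"
    unfolding W_def A_def[symmetric] B_def[symmetric] using A B
    by (simp add: powr_mult powr_powr)
  also have "(real n + 1) powr ((p - 2) * (1/p)) * (real n + 1) powr ((p' - 2) * (1/p')) = 1"
    unfolding powr_add[symmetric] e by simp
  finally show ?thesis unfolding A_def B_def by simp
qed

lemma K1: "Dm n \<le> K0 * (W p n powr (1/p) * W p' n powr (1/p'))"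
proof -
  define A where "A = moment \<omega> (real n * p + 1)"
  define B where "B = moment \<omega> (real n * p' + 1)"
  have A: "0 < A" unfolding A_def using mom_pos[OF rw, of "real n * p + 1"] p1 by simp
  have B: "0 < B" unfolding B_def using mom_pos[OF rw, of "real n * p' + 1"] p'1 by simp
  have d: "0 < Dm n" by (rule Dm_pos)
  have "Dm n = Dm n powr (1/p) * Dm n powr (1/p')" using d conj by (simp add: powr_add[symmetric])
  also have "\<dots> \<le> (K0 * A) powr (1/p) * (K0 * B) powr (1/p')"
    using K0(3,5)[of n] d p1 p'1 unfolding A_def B_def by (intro mult_mono powr_mono2) auto
  also have "\<dots> = (K0 powr (1/p) * K0 powr (1/p')) * (A powr (1/p) * B powr (1/p'))"
    using K0(1) A B by (simp add: powr_mult)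
  also have "K0 powr (1/p) * K0 powr (1/p') = K0" using K0(1) conj by (simp add: powr_add[symmetric])
  finally show ?thesis unfolding W_prod A_def B_def .
qed

lemma K2: "W p' n powr (p - 1) * W p n \<le> K0 powr p * Dm n powr p"
proof -
  define A where "A = moment \<omega> (real n * p + 1)"
  define B where "B = moment \<omega> (real n * p' + 1)"
  have A: "0 < A" unfolding A_def using mom_pos[OF rw, of "real n * p + 1"] p1 by simp
  have B: "0 < B" unfolding B_def using mom_pos[OF rw, of "real n * p' + 1"] p'1 by simp
  have d: "0 < Dm n" by (rule Dm_pos)
  have e: "(p' - 2) * (p - 1) + (p - 2) = 0" using pp2 by (simp add: algebra_simps)
  have "W p' n powr (p - 1) * W p n =
        ((real n + 1) powr ((p' - 2) * (p - 1)) * (real n + 1) powr (p - 2)) * (B powr (p - 1) * A)"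
    unfolding W_def A_def[symmetric] B_def[symmetric] using A B
    by (simp add: powr_mult powr_powr)
  also have "(real n + 1) powr ((p' - 2) * (p - 1)) * (real n + 1) powr (p - 2) = 1"
    unfolding powr_add[symmetric] e by simp
  also have "B powr (p - 1) * A \<le> (K0 * Dm n) powr (p - 1) * (K0 * Dm n)"
    using K0(2,4)[of n] A B p1 unfolding A_def B_def by (intro mult_mono powr_mono2) auto
  also have "\<dots> = K0 powr p * Dm n powr p"
  proof -
    have "(K0 * Dm n) powr (p - 1) * (K0 * Dm n) = (K0 * Dm n) powr p"
      using K0(1) d by (simp add: powr_diff field_simps)
    then show ?thesis using K0(1) d by (simp add: powr_mult)
  qed
  finally show ?thesis by simp
qed


lemma pair_core:
  assumes f: "in_HL \<omega> p f" and g: "in_HL \<omega> p' g"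
  shows "summable (\<lambda>n. norm (tcoeff f n * cnj (tcoeff g n) * of_real (Dm n)))"
    and "(\<Sum>n. norm (tcoeff f n * cnj (tcoeff g n) * of_real (Dm n))) \<le> K0 * (HL_norm \<omega> p f * HL_norm \<omega> p' g)"
proof -
  define x where "x n = norm (tcoeff f n) * W p n powr (1/p)" for n
  define y where "y n = norm (tcoeff g n) * W p' n powr (1/p')" for n
  have xp: "x n powr p = HL_sum \<omega> p f n" for n
    unfolding x_def HL_sum_W using W_pos[of p n] p1 by (simp add: powr_mult powr_powr)
  have yp: "y n powr p' = HL_sum \<omega> p' g n" for n
    unfolding y_def HL_sum_W using W_pos[of p' n] p'1 by (simp add: powr_mult powr_powr)
  have sf: "summable (HL_sum \<omega> p f)" using f unfolding in_HL_def by simp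
  have sg: "summable (HL_sum \<omega> p' g)" using g unfolding in_HL_def by simp
  have H: "summable (\<lambda>n. x n * y n) \<and>
         (\<Sum>n. x n * y n) \<le> (\<Sum>n. x n powr p) powr (1/p) * (\<Sum>n. y n powr p') powr (1/p')"
  proof (rule holder_series[OF p1 p'1 conj])
    show "summable (\<lambda>n. x n powr p)" unfolding xp by (rule sf)
    show "summable (\<lambda>n. y n powr p')" unfolding yp by (rule sg)
  qed (auto simp: x_def y_def)
  have le: "norm (tcoeff f n * cnj (tcoeff g n) * of_real (Dm n)) \<le> K0 * (x n * y n)" for n
  proof -
    have "norm (tcoeff f n * cnj (tcoeff g n) * of_real (Dm n)) = norm (tcoeff f n) * norm (tcoeff g n) * Dm n"
      using Dm_pos[of n] by (simp add: norm_mult)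
    also have "\<dots> \<le> norm (tcoeff f n) * norm (tcoeff g n) * (K0 * (W p n powr (1/p) * W p' n powr (1/p')))"
      by (intro mult_left_mono K1) auto
    also have "\<dots> = K0 * (x n * y n)" unfolding x_def y_def by (simp add: ac_simps)
    finally show ?thesis .
  qed
  have sxy: "summable (\<lambda>n. K0 * (x n * y n))" using H by (intro summable_mult) auto
  show s: "summable (\<lambda>n. norm (tcoeff f n * cnj (tcoeff g n) * of_real (Dm n)))"
    by (rule summable_comparison_test'[OF sxy]) (use le in auto)
  have "(\<Sum>n. norm (tcoeff f n * cnj (tcoeff g n) * of_real (Dm n))) \<le> (\<Sum>n. K0 * (x n * y n))"
    by (rule suminf_le[OF le s sxy])
  also have "\<dots> = K0 * (\<Sum>n. x n * y n)" using H by (simp add: suminf_mult)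
  also have "\<dots> \<le> K0 * (HL_norm \<omega> p f * HL_norm \<omega> p' g)"
    using H K0(1) unfolding HL_norm_def xp yp by (intro mult_left_mono) auto
  finally show "(\<Sum>n. norm (tcoeff f n * cnj (tcoeff g n) * of_real (Dm n))) \<le> K0 * (HL_norm \<omega> p f * HL_norm \<omega> p' g)" .
qed

lemma pairing_props:
  assumes f: "in_HL \<omega> p f" and g: "in_HL \<omega> p' g"
  shows "\<forall>r\<in>{0..<1}. summable (\<lambda>n. tcoeff f n * cnj (tcoeff g n)
                             * of_real (moment \<omega> (2 * real n + 1)) * of_real r ^ n)"
    and "(pair_r \<omega> f g \<longlongrightarrow> (\<Sum>n. tcoeff f n * cnj (tcoeff g n) * of_real (Dm n))) (at_left 1)"
    and "pairing \<omega> f g = (\<Sum>n. tcoeff f n * cnj (tcoeff g n) * of_real (Dm n))"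
proof -
  note s = pair_core(1)[OF f g]
  show "\<forall>r\<in>{0..<1}. summable (\<lambda>n. tcoeff f n * cnj (tcoeff g n)
                             * of_real (moment \<omega> (2 * real n + 1)) * of_real r ^ n)"
  proof
    fix r :: real assume r: "r \<in> {0..<1}"
    show "summable (\<lambda>n. tcoeff f n * cnj (tcoeff g n) * of_real (moment \<omega> (2 * real n + 1)) * of_real r ^ n)"
    proof (rule summable_norm_cancel, rule summable_comparison_test'[OF s])
      fix n
      have "norm (tcoeff f n * cnj (tcoeff g n) * of_real (moment \<omega> (2 * real n + 1)) * of_real r ^ n)
           = norm (tcoeff f n * cnj (tcoeff g n) * of_real (Dm n)) * r ^ n"
        using r unfolding Dm_def by (simp add: norm_mult norm_power)
      also have "\<dots> \<le> norm (tcoeff f n * cnj (tcoeff g n) * of_real (Dm n)) * 1"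
        using r by (intro mult_left_mono power_le_one) auto
      finally show "norm (norm (tcoeff f n * cnj (tcoeff g n) * of_real (moment \<omega> (2 * real n + 1)) * of_real r ^ n))
                   \<le> norm (tcoeff f n * cnj (tcoeff g n) * of_real (Dm n))" by simp
    qed
  qed
  have t: "(pair_r \<omega> f g \<longlongrightarrow> (\<Sum>n. tcoeff f n * cnj (tcoeff g n) * of_real (Dm n))) (at_left 1)"
    using abel_lim[OF s] unfolding pair_r_def Dm_def by simp
  then show "(pair_r \<omega> f g \<longlongrightarrow> (\<Sum>n. tcoeff f n * cnj (tcoeff g n) * of_real (Dm n))) (at_left 1)" .
  show "pairing \<omega> f g = (\<Sum>n. tcoeff f n * cnj (tcoeff g n) * of_real (Dm n))"
    unfolding pairing_def using t by (intro tendsto_Lim) auto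
qed

lemma pairing_bound:
  assumes f: "in_HL \<omega> p f" and g: "in_HL \<omega> p' g"
  shows "norm (pairing \<omega> f g) \<le> K0 * HL_norm \<omega> p' g * HL_norm \<omega> p f"
proof -
  have "norm (pairing \<omega> f g) \<le> (\<Sum>n. norm (tcoeff f n * cnj (tcoeff g n) * of_real (Dm n)))"
    unfolding pairing_props(3)[OF f g] by (rule summable_norm[OF pair_core(1)[OF f g]])
  also have "\<dots> \<le> K0 * (HL_norm \<omega> p f * HL_norm \<omega> p' g)" by (rule pair_core(2)[OF f g])
  finally show ?thesis by (simp add: ac_simps)
qed

lemma pairing_P:
  assumes g: "in_HL \<omega> p' g"
  shows "pairing \<omega> (P a N) g = (\<Sum>n<N. a n * cnj (tcoeff g n) * of_real (Dm n))"
proof -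
  have f: "in_HL \<omega> p (P a N)" using P_in_HL p1 by simp
  have "(\<Sum>n. tcoeff (P a N) n * cnj (tcoeff g n) * of_real (Dm n)) = (\<Sum>n\<in>{..<N}. tcoeff (P a N) n * cnj (tcoeff g n) * of_real (Dm n))"
    by (rule suminf_finite) (auto simp: P_tcoeff)
  then show ?thesis unfolding pairing_props(3)[OF f g] by (simp add: P_tcoeff)
qed

definition alpha :: "(nat \<Rightarrow> complex) \<Rightarrow> nat \<Rightarrow> complex" where
  "alpha b n = b n * of_real (norm (b n) powr (p' - 2) * W p' n / Dm n)"

lemma alpha_pair: "alpha b n * cnj (b n) * of_real (Dm n) = of_real (norm (b n) powr p' * W p' n)"
proof (cases "b n = 0")
  case True then show ?thesis unfolding alpha_def by simp
next
  case False
  have t: "0 < norm (b n)" using False by simp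
  have "alpha b n * cnj (b n) * of_real (Dm n) = (b n * cnj (b n)) * of_real (norm (b n) powr (p' - 2) * W p' n / Dm n * Dm n)"
    unfolding alpha_def by (simp add: ac_simps)
  also have "b n * cnj (b n) = of_real (norm (b n) powr 2)"
  proof -
    have "b n * cnj (b n) = of_real ((norm (b n))^2)" by (rule complex_norm_square[symmetric])
    then show ?thesis using t by (simp add: powr_realpow)
  qed
  also have "of_real (norm (b n) powr 2) * of_real (norm (b n) powr (p' - 2) * W p' n / Dm n * Dm n)
      = (of_real (norm (b n) powr 2 * norm (b n) powr (p' - 2) * W p' n) :: complex)"
    using Dm_pos[of n] by simp
  also have "norm (b n) powr 2 * norm (b n) powr (p' - 2) = norm (b n) powr p'"
    unfolding powr_add[symmetric] by simp
  finally show ?thesis .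
qed

lemma alpha_norm: "norm (alpha b n) powr p * W p n \<le> K0 powr p * (norm (b n) powr p' * W p' n)"
proof (cases "b n = 0")
  case True then show ?thesis unfolding alpha_def using p1 by simp
next
  case False
  define t where "t = norm (b n)"
  have t: "0 < t" using False unfolding t_def by simp
  define w where "w = W p' n"
  have w: "0 < w" unfolding w_def using W_pos p'1 by simp
  define d where "d = Dm n"
  have d: "0 < d" unfolding d_def using Dm_pos by simp
  have wp: "0 < W p n" using W_pos p1 by simp
  have "norm (alpha b n) = t powr (p' - 1) * w / d"
  proof -
    have "norm (alpha b n) = t * (t powr (p' - 2) * w / d)"
      unfolding alpha_def t_def w_def d_def using W_pos[of p' n] Dm_pos[of n] p'1 by (simp add: norm_mult norm_divide)
    also have "t * t powr (p' - 2) = t powr (p' - 1)"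
    proof -
      have "t * t powr (p' - 2) = t powr 1 * t powr (p' - 2)" using t by simp
      also have "\<dots> = t powr (p' - 1)" unfolding powr_add[symmetric] by simp
      finally show ?thesis .
    qed
    then have "t * (t powr (p' - 2) * w / d) = t powr (p' - 1) * w / d" by (simp add: field_simps)
    finally show ?thesis .
  qed
  then have "norm (alpha b n) powr p = t powr p' * w powr p / d powr p"
    using t w d p1 by (simp add: powr_mult powr_divide powr_powr pp1)
  also have "w powr p = w * w powr (p - 1)" using w by (simp add: powr_diff)
  finally have "norm (alpha b n) powr p * W p n = t powr p' * w * (w powr (p - 1) * W p n) / d powr p"
    by (simp add: field_simps)
  also have "\<dots> \<le> t powr p' * w * (K0 powr p * d powr p) / d powr p"
    using K2[of n] t w d unfolding w_def[symmetric] d_def[symmetric]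
    by (intro divide_right_mono mult_left_mono) auto
  also have "\<dots> = K0 powr p * (t powr p' * w)" using d by simp
  finally show ?thesis unfolding t_def w_def .
qed

lemma KL:
  fixes b :: "nat \<Rightarrow> complex" and M :: real
  assumes "(\<Sum>n<N. norm (b n) powr p' * W p' n) \<le> M * HL_norm \<omega> p (P (alpha b) N)"
  shows "(\<Sum>n<N. norm (b n) powr p' * W p' n) \<le> (M * K0) powr p'"
proof -
  define S where "S = (\<Sum>n<N. norm (b n) powr p' * W p' n)"
  have S0: "0 \<le> S" unfolding S_def using W_pos p'1 by (auto intro!: sum_nonneg mult_nonneg_nonneg less_imp_le[OF W_pos])
  have Hn: "HL_norm \<omega> p (P (alpha b) N) \<le> (K0 powr p * S) powr (1/p)"
  proof -
    have "HL_norm \<omega> p (P (alpha b) N) = (\<Sum>n<N. norm (alpha b n) powr p * W p n) powr (1/p)"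
      using HL_norm_P[of p \<omega> "alpha b" N] p1 unfolding W_def by simp
    also have "\<dots> \<le> (K0 powr p * S) powr (1/p)"
    proof -
      have nn: "0 \<le> norm (alpha b n) powr p * W p n" for n using W_pos[of p n] p1 by simp
      show ?thesis unfolding S_def sum_distrib_left using p1
        by (intro powr_mono2 sum_mono alpha_norm sum_nonneg nn) auto
    qed
    finally show ?thesis .
  qed
  have Hn0: "0 \<le> HL_norm \<omega> p (P (alpha b) N)" unfolding HL_norm_def by simp
  have "S \<le> (M * K0) powr p'"
  proof (cases "S = 0")
    case True then show ?thesis by simp
  next
    case False
    then have Sp: "0 < S" using S0 by simp
    have SM: "S \<le> M * HL_norm \<omega> p (P (alpha b) N)" using assms unfolding S_def .
    have Mp: "0 < M"
    proof (rule ccontr)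
      assume "\<not> 0 < M"
      then have "M * HL_norm \<omega> p (P (alpha b) N) \<le> 0" using Hn0 by (simp add: mult_nonpos_nonneg)
      then show False using SM Sp by simp
    qed
    have "S \<le> M * (K0 powr p * S) powr (1/p)" using SM Hn Mp by (meson mult_left_mono less_imp_le order_trans)
    also have "(K0 powr p * S) powr (1/p) = K0 * S powr (1/p)"
      using K0(1) Sp p1 by (simp add: powr_mult powr_powr)
    finally have "S \<le> (M * K0) * S powr (1/p)" by (simp add: ac_simps)
    moreover have "S = S powr (1/p') * S powr (1/p)" using Sp conj by (simp add: powr_add[symmetric] add.commute)
    ultimately have "S powr (1/p') * S powr (1/p) \<le> (M * K0) * S powr (1/p)" by simp
    then have "S powr (1/p') \<le> M * K0" using Sp by simp
    then have "(S powr (1/p')) powr p' \<le> (M * K0) powr p'" using p'1 by (intro powr_mono2) auto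
    then show ?thesis using Sp p'1 by (simp add: powr_powr)
  qed
  then show ?thesis unfolding S_def .
qed


lemma P_mono: "(\<lambda>z. c * z ^ N) = P (\<lambda>n. if n = N then c else 0) (Suc N)"
  by (rule ext) (simp add: P_def)

lemma mono_HL: "q > 0 \<Longrightarrow> in_HL \<omega> q (\<lambda>z. c * z ^ N)"
  unfolding P_mono by (rule P_in_HL)

lemma mono1_HL: "q > 0 \<Longrightarrow> in_HL \<omega> q (\<lambda>z. z ^ N)"
  using mono_HL[of q 1 N] by simp

lemma M_nonneg:
  assumes g: "in_HL \<omega> p' g" and bd: "\<forall>f. in_HL \<omega> p f \<longrightarrow> norm (L f) \<le> M * HL_norm \<omega> p f"
  shows "0 \<le> M"
proof -
  have "HL_norm \<omega> p (P (\<lambda>n. 1) 1) = moment \<omega> 1 powr (1/p)"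
    using HL_norm_P[of p \<omega> "\<lambda>n. 1" 1] p1 by simp
  then have pos: "0 < HL_norm \<omega> p (P (\<lambda>n. 1) 1)" using mom_pos[OF rw, of 1] by simp
  have "0 \<le> M * HL_norm \<omega> p (P (\<lambda>n. 1) 1)" using bd P_in_HL[of p \<omega> "\<lambda>n. 1" 1] p1
    by (meson norm_ge_zero order_trans zero_less_one less_trans)
  then show ?thesis using pos by (simp add: zero_le_mult_iff)
qed

lemma lower_bound:
  assumes g: "in_HL \<omega> p' g" and bd: "\<forall>f. in_HL \<omega> p f \<longrightarrow> norm (pairing \<omega> f g) \<le> M * HL_norm \<omega> p f"
  shows "(1 / K0) * HL_norm \<omega> p' g \<le> M"
proof -
  have M0: "0 \<le> M" using M_nonneg[OF g, of "\<lambda>f. pairing \<omega> f g"] bd by simp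
  define b where "b = tcoeff g"
  have SN: "(\<Sum>n<N. norm (b n) powr p' * W p' n) \<le> (M * K0) powr p'" for N
  proof (rule KL)
    have "pairing \<omega> (P (alpha b) N) g = (\<Sum>n<N. alpha b n * cnj (b n) * of_real (Dm n))"
      unfolding b_def by (rule pairing_P[OF g])
    also have "\<dots> = of_real (\<Sum>n<N. norm (b n) powr p' * W p' n)" by (simp add: alpha_pair)
    finally have e: "pairing \<omega> (P (alpha b) N) g = of_real (\<Sum>n<N. norm (b n) powr p' * W p' n)" .
    have S0: "0 \<le> (\<Sum>n<N. norm (b n) powr p' * W p' n)"
      using W_pos p'1 by (intro sum_nonneg mult_nonneg_nonneg) (auto intro: less_imp_le)
    have "norm (pairing \<omega> (P (alpha b) N) g) = (\<Sum>n<N. norm (b n) powr p' * W p' n)"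
      unfolding e norm_of_real using S0 by (simp only: abs_of_nonneg)
    then show "(\<Sum>n<N. norm (b n) powr p' * W p' n) \<le> M * HL_norm \<omega> p (P (alpha b) N)"
      using bd P_in_HL[of p \<omega> "alpha b" N] p1 by auto
  qed
  have sg: "summable (HL_sum \<omega> p' g)" using g unfolding in_HL_def by simp
  have "(\<Sum>n. HL_sum \<omega> p' g n) \<le> (M * K0) powr p'"
    by (rule suminf_le_const[OF sg]) (simp add: HL_sum_W b_def[symmetric] SN)
  then have "HL_norm \<omega> p' g \<le> ((M * K0) powr p') powr (1/p')"
  proof -
    have nn: "0 \<le> HL_sum \<omega> p' g n" for n unfolding HL_sum_W using W_pos[of p' n] p'1 by simp
    show ?thesis unfolding HL_norm_def
      by (rule powr_mono2) (use p'1 suminf_nonneg[OF sg nn] \<open>(\<Sum>n. HL_sum \<omega> p' g n) \<le> (M * K0) powr p'\<close> in auto)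
  qed
  also have "\<dots> = M * K0" using M0 K0(1) p'1 by (simp add: powr_powr)
  finally show ?thesis using K0(1) by (simp add: field_simps)
qed


lemma zero_HL: "in_HL \<omega> p (\<lambda>z. 0)"
proof -
  have "P (\<lambda>n. 0) 0 = (\<lambda>z. 0)" by (simp add: P_def)
  then show ?thesis using P_in_HL[of p \<omega> "\<lambda>n. 0" 0] p1 by simp
qed

lemma L_P:
  assumes add: "\<forall>f h. in_HL \<omega> p f \<and> in_HL \<omega> p h \<longrightarrow> L (\<lambda>z. f z + h z) = L f + L h"
    and sc: "\<forall>a f. in_HL \<omega> p f \<longrightarrow> L (\<lambda>z. a * f z) = a * L f"
  shows "L (P a N) = (\<Sum>n<N. a n * L (\<lambda>z. z ^ n))"
proof (induction N)
  case 0
  have "L (\<lambda>z. 0 * 0) = 0 * L (\<lambda>z. 0)" using sc[rule_format, OF zero_HL, of 0] by simp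
  then show ?case by (simp add: P_def)
next
  case (Suc N)
  have e: "P a (Suc N) = (\<lambda>z. P a N z + a N * z ^ N)" by (rule ext) (simp add: P_def)
  have h1: "in_HL \<omega> p (P a N)" using P_in_HL[of p \<omega> a N] p1 by simp
  have h2: "in_HL \<omega> p (\<lambda>z. a N * z ^ N)" using mono_HL[of p "a N" N] p1 by simp
  have h3: "in_HL \<omega> p (\<lambda>z. z ^ N)" using mono1_HL[of p N] p1 by simp
  have "L (\<lambda>z. P a N z + a N * z ^ N) = L (P a N) + L (\<lambda>z. a N * z ^ N)"
    using add[rule_format, OF conjI[OF h1 h2]] .
  moreover have "L (\<lambda>z. a N * z ^ N) = a N * L (\<lambda>z. z ^ N)"
    using sc[rule_format, OF h3] .
  ultimately show ?case unfolding e using Suc by simp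
qed

lemma rep_eq:
  assumes add: "\<forall>f h. in_HL \<omega> p f \<and> in_HL \<omega> p h \<longrightarrow> L (\<lambda>z. f z + h z) = L f + L h"
    and sc: "\<forall>a f. in_HL \<omega> p f \<longrightarrow> L (\<lambda>z. a * f z) = a * L f"
    and bd: "\<forall>f. in_HL \<omega> p f \<longrightarrow> norm (L f) \<le> M * HL_norm \<omega> p f"
    and g: "in_HL \<omega> p' g" and cg: "\<And>n. L (\<lambda>z. z ^ n) = cnj (tcoeff g n) * of_real (Dm n)"
    and f: "in_HL \<omega> p f"
  shows "L f = pairing \<omega> f g"
proof -
  define a where "a = tcoeff f"
  have LP: "L (P a N) = (\<Sum>n<N. a n * cnj (tcoeff g n) * of_real (Dm n))" for N
    unfolding L_P[OF add sc] cg by (simp add: ac_simps)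
  have "(\<lambda>n. a n * cnj (tcoeff g n) * of_real (Dm n)) sums pairing \<omega> f g"
    unfolding pairing_props(3)[OF f g] a_def
    by (rule summable_sums, rule summable_norm_cancel, rule pair_core(1)[OF f g])
  then have lim1: "(\<lambda>N. L (P a N)) \<longlonglongrightarrow> pairing \<omega> f g" unfolding sums_def LP .
  define h where "h N = (\<lambda>z. f z + (-1) * P a N z)" for N
  have fh: "f holomorphic_on ball 0 1" using f unfolding in_HL_def by simp
  have th: "tcoeff (h N) n = (if n < N then 0 else a n)" for N n
  proof -
    have "tcoeff (h N) n = a n + (-1) * (if n < N then a n else 0)"
    proof (rule tcoeff_sums)
      fix z :: complex assume z: "z \<in> ball 0 1"
      have "(\<lambda>n. a n * z ^ n + (-1) * ((if n < N then a n else 0) * z ^ n)) sums (f z + (-1) * P a N z)"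
        using sums_add[OF taylor_sums[OF fh z] sums_mult[OF P_sums, of "-1"]] unfolding a_def by simp
      then show "(\<lambda>n. (a n + (-1) * (if n < N then a n else 0)) * z ^ n) sums h N z"
        unfolding h_def by (simp add: algebra_simps)
    qed
    then show ?thesis by simp
  qed
  define s where "s = HL_sum \<omega> p f"
  have sf: "summable s" using f unfolding in_HL_def s_def by simp
  have s0: "0 \<le> s n" for n unfolding s_def HL_sum_W using W_pos[of p n] p1 by simp
  have hs: "HL_sum \<omega> p (h N) n = s n - (if n \<in> {..<N} then s n else 0)" for N n
    unfolding HL_sum_def s_def th a_def using p1 by auto
  have sIf: "(\<lambda>n. if n \<in> {..<N} then s n else 0) sums (\<Sum>n<N. s n)" for N
    by (rule sums_If_finite_set) simp
  have hsum: "HL_sum \<omega> p (h N) sums (suminf s - (\<Sum>n<N. s n))" for N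
    unfolding hs by (rule sums_diff[OF summable_sums[OF sf] sIf])
  have hHL: "in_HL \<omega> p (h N)" for N
    unfolding in_HL_def
  proof
    show "h N holomorphic_on ball 0 1" unfolding h_def using fh P_holo by (intro holomorphic_intros) auto
    show "summable (HL_sum \<omega> p (h N))" using hsum sums_summable by blast
  qed
  have hnorm: "HL_norm \<omega> p (h N) = (suminf s - (\<Sum>n<N. s n)) powr (1/p)" for N
    unfolding HL_norm_def using sums_unique[OF hsum] by simp
  have tail0: "(\<lambda>N. suminf s - (\<Sum>n<N. s n)) \<longlonglongrightarrow> 0"
    using tendsto_diff[OF tendsto_const summable_LIMSEQ[OF sf], of "suminf s"] by simp
  have tailnn: "0 \<le> suminf s - (\<Sum>n<N. s n)" for N
    using sum_le_suminf[OF sf, of "{..<N}"] s0 by simp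
  have hn0: "(\<lambda>N. HL_norm \<omega> p (h N)) \<longlonglongrightarrow> 0"
    unfolding hnorm using p1 by (intro tendsto_zero_powrI[OF tail0 tendsto_const] always_eventually allI tailnn) auto
  have split: "L f = L (P a N) + L (h N)" for N
  proof -
    have "(\<lambda>z. P a N z + h N z) = f" unfolding h_def by (rule ext) simp
    moreover have "in_HL \<omega> p (P a N)" using P_in_HL[of p \<omega> a N] p1 by simp
    ultimately show ?thesis using add[rule_format, OF conjI[OF _ hHL[of N]], of "P a N"] by simp
  qed
  have "(\<lambda>N. L (P a N) - L f) \<longlonglongrightarrow> 0"
  proof (rule Lim_null_comparison)
    show "\<forall>\<^sub>F N in sequentially. norm (L (P a N) - L f) \<le> M * HL_norm \<omega> p (h N)"
    proof (rule always_eventually, rule allI)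
      fix N
      have "norm (L (P a N) - L f) = norm (L (h N))" using split[of N] by (simp add: norm_minus_commute)
      also have "\<dots> \<le> M * HL_norm \<omega> p (h N)" using bd[rule_format, OF hHL] .
      finally show "norm (L (P a N) - L f) \<le> M * HL_norm \<omega> p (h N)" .
    qed
    show "(\<lambda>N. M * HL_norm \<omega> p (h N)) \<longlonglongrightarrow> 0" using tendsto_mult_right_zero[OF hn0] by simp
  qed
  then have "(\<lambda>N. L (P a N)) \<longlonglongrightarrow> L f" by (rule LIM_zero_cancel)
  from LIMSEQ_unique[OF this lim1] show ?thesis .
qed

lemma uniq:
  assumes g1: "in_HL \<omega> p' g1" and g2: "in_HL \<omega> p' g2"
    and eq: "\<forall>f. in_HL \<omega> p f \<longrightarrow> pairing \<omega> f g1 = pairing \<omega> f g2"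
  shows "\<forall>z\<in>ball 0 1. g1 z = g2 z"
proof
  fix z :: complex assume z: "z \<in> ball 0 1"
  have tc: "tcoeff g1 n = tcoeff g2 n" for n
  proof -
    define e where "e = (\<lambda>k. if k = n then (1::complex) else 0)"
    have "pairing \<omega> (P e (Suc n)) g1 = pairing \<omega> (P e (Suc n)) g2"
      using eq[rule_format, OF P_in_HL[of p \<omega> e "Suc n"]] p1 by simp
    then have "cnj (tcoeff g1 n) * of_real (Dm n) = cnj (tcoeff g2 n) * of_real (Dm n)"
      unfolding pairing_P[OF g1] pairing_P[OF g2] e_def by simp
    then have "cnj (tcoeff g1 n) = cnj (tcoeff g2 n)" using Dm_pos[of n] by simp
    then show ?thesis by simp
  qed
  have h1: "g1 holomorphic_on ball 0 1" using g1 unfolding in_HL_def by simp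
  have h2: "g2 holomorphic_on ball 0 1" using g2 unfolding in_HL_def by simp
  show "g1 z = g2 z" using taylor_sums[OF h1 z] taylor_sums[OF h2 z] unfolding tc
    using sums_unique2 by blast
qed


lemma rep_exists:
  assumes add: "\<forall>f h. in_HL \<omega> p f \<and> in_HL \<omega> p h \<longrightarrow> L (\<lambda>z. f z + h z) = L f + L h"
    and sc: "\<forall>a f. in_HL \<omega> p f \<longrightarrow> L (\<lambda>z. a * f z) = a * L f"
    and bd: "\<forall>f. in_HL \<omega> p f \<longrightarrow> norm (L f) \<le> M * HL_norm \<omega> p f"
  shows "\<exists>g. in_HL \<omega> p' g \<and> (\<forall>f. in_HL \<omega> p f \<longrightarrow> L f = pairing \<omega> f g)"
proof -
  define c where "c n = L (\<lambda>z. z ^ n)" for n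
  define b where "b n = cnj (c n) / of_real (Dm n)" for n
  have cb: "cnj (b n) * of_real (Dm n) = c n" for n
    unfolding b_def using Dm_pos[of n] by simp
  define T where "T n = norm (b n) powr p' * W p' n" for n
  have T0: "0 \<le> T n" for n unfolding T_def using W_pos[of p' n] p'1 by simp
  define B0 where "B0 = (M * K0) powr p'"
  have SN: "(\<Sum>n<N. T n) \<le> B0" for N
    unfolding T_def B0_def
  proof (rule KL)
    have "L (P (alpha b) N) = (\<Sum>n<N. alpha b n * c n)" unfolding L_P[OF add sc] c_def ..
    also have "\<dots> = (\<Sum>n<N. alpha b n * cnj (b n) * of_real (Dm n))" by (simp add: cb[symmetric] ac_simps)
    also have "\<dots> = of_real (\<Sum>n<N. norm (b n) powr p' * W p' n)" by (simp add: alpha_pair)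
    finally have e: "L (P (alpha b) N) = of_real (\<Sum>n<N. norm (b n) powr p' * W p' n)" .
    have S0: "0 \<le> (\<Sum>n<N. norm (b n) powr p' * W p' n)"
      using T0 unfolding T_def by (intro sum_nonneg) auto
    have "norm (L (P (alpha b) N)) = (\<Sum>n<N. norm (b n) powr p' * W p' n)"
      unfolding e norm_of_real using S0 by (simp only: abs_of_nonneg)
    then show "(\<Sum>n<N. norm (b n) powr p' * W p' n) \<le> M * HL_norm \<omega> p (P (alpha b) N)"
      using bd[rule_format, OF P_in_HL[of p \<omega> "alpha b" N]] p1 by simp
  qed
  have sT: "summable T" by (rule summableI_nonneg_bounded[OF T0 SN])
  have Tle: "T n \<le> B0" for n
  proof -
    have "T n \<le> (\<Sum>i<Suc n. T i)" by (rule member_le_sum) (auto intro: T0)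
    then show ?thesis using SN[of "Suc n"] by simp
  qed
  have B00: "0 \<le> B0" unfolding B0_def by simp
  have sb: "summable (\<lambda>n. norm (b n) * \<rho> ^ n)" if \<rho>: "0 \<le> \<rho>" "\<rho> < 1" for \<rho>
  proof -
    define s where "s = (1 + \<rho>) / 2"
    have s: "0 < s" "s < 1" "\<rho> < s" unfolding s_def using \<rho> by auto
    define r where "r = s powr (1/p')"
    have r0: "0 < r" unfolding r_def using s by simp
    have r1: "r < 1" unfolding r_def using powr_less_mono2[of "1/p'" s 1] s p'1 by simp
    define Fr where "Fr = omega_hat \<omega> r"
    have Fr: "0 < Fr" unfolding Fr_def using Fpos[OF rw, of r] r0 r1 by simp
    define Cc where "Cc = B0 / (r * Fr)"
    have Cc0: "0 \<le> Cc" unfolding Cc_def using B00 r0 Fr by simp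
    have bound: "norm (b n) * \<rho> ^ n \<le> \<rho> ^ n + Cc * ((real n + 1) * (\<rho> / s) ^ n)" for n
    proof -
      have rp: "r powr (real n * p' + 1) = s ^ n * r"
      proof -
        have "r powr (real n * p' + 1) = r powr (real n * p') * r" using r0 by (simp add: powr_add)
        also have "r powr (real n * p') = s powr (real n)" unfolding r_def using s p'1 by (simp add: powr_powr)
        also have "\<dots> = s ^ n" using s by (simp add: powr_realpow)
        finally show ?thesis .
      qed
      have lw: "s ^ n * r * Fr / (real n + 1) \<le> W p' n"
      proof -
        have m: "s ^ n * r * Fr \<le> moment \<omega> (real n * p' + 1)"
          using mom_lb[OF rw, of "real n * p' + 1" r] r0 r1 p'1 unfolding rp Fr_def by simp
        have e: "1 / (real n + 1) \<le> (real n + 1) powr (p' - 2)"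
        proof -
          have "(real n + 1) powr (-1) \<le> (real n + 1) powr (p' - 2)" using p'1 by (intro powr_mono) auto
          then show ?thesis by (simp add: powr_minus divide_inverse)
        qed
        have "s ^ n * r * Fr / (real n + 1) = (1 / (real n + 1)) * (s ^ n * r * Fr)" by simp
        also have "\<dots> \<le> (real n + 1) powr (p' - 2) * moment \<omega> (real n * p' + 1)"
          using e m s r0 Fr by (intro mult_mono) auto
        finally show ?thesis unfolding W_def .
      qed
      have lwp: "0 < s ^ n * r * Fr / (real n + 1)" using s r0 Fr by simp
      have "norm (b n) powr p' * (s ^ n * r * Fr / (real n + 1)) \<le> norm (b n) powr p' * W p' n"
        using lw by (intro mult_left_mono) auto
      also have "\<dots> \<le> B0" using Tle[of n] unfolding T_def .
      finally have "norm (b n) powr p' \<le> B0 / (s ^ n * r * Fr / (real n + 1))"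
        using lwp by (simp add: field_simps)
      also have "\<dots> = Cc * (real n + 1) / s ^ n" unfolding Cc_def using s r0 Fr by (simp add: field_simps)
      finally have bp: "norm (b n) powr p' \<le> Cc * (real n + 1) / s ^ n" .
      have b1: "norm (b n) \<le> 1 + norm (b n) powr p'"
      proof (cases "norm (b n) \<le> 1")
        case True then show ?thesis using powr_ge_zero[of "norm (b n)" p'] by linarith
      next
        case False
        then have "norm (b n) powr 1 \<le> norm (b n) powr p'" using p'1 by (intro powr_mono) auto
        then show ?thesis using False by simp
      qed
      have "norm (b n) * \<rho> ^ n \<le> (1 + Cc * (real n + 1) / s ^ n) * \<rho> ^ n"
        using b1 bp \<rho> by (intro mult_right_mono) auto
      also have "\<dots> = \<rho> ^ n + Cc * ((real n + 1) * (\<rho> / s) ^ n)"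
        using s by (simp add: field_simps power_divide)
      finally show ?thesis .
    qed
    have "summable (\<lambda>n. \<rho> ^ n + Cc * ((real n + 1) * (\<rho> / s) ^ n))"
      using \<rho> s by (intro summable_add summable_geometric summable_mult summable_lin_geom) auto
    then show ?thesis
      by (rule summable_comparison_test'[where N=0]) (use bound \<rho> in \<open>simp add: abs_of_nonneg\<close>)
  qed
  define g where "g = (\<lambda>z. \<Sum>n. b n * z ^ n)"
  have gh: "g holomorphic_on ball 0 1" unfolding g_def by (rule series_holo(1)[OF sb])
  have gt: "tcoeff g n = b n" for n unfolding g_def by (rule series_holo(2)[OF sb])
  have gHL: "in_HL \<omega> p' g"
  proof -
    have "HL_sum \<omega> p' g = T" by (rule ext) (simp add: HL_sum_W gt T_def)
    then show ?thesis unfolding in_HL_def using gh sT by simp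
  qed
  have cg: "L (\<lambda>z. z ^ n) = cnj (tcoeff g n) * of_real (Dm n)" for n
    unfolding gt cb c_def ..
  show ?thesis
    using gHL rep_eq[OF add sc bd gHL cg] by blast
qed

end

theorem mainTheorem16:
  fixes \<omega> :: "real \<Rightarrow> real" and p p' :: real
  assumes "1 < p" and "p' = p / (p - 1)" and "Dhat \<omega>"
  shows
    \<comment> \<open>the pairing is well defined on HL_p x HL_p'\<close>
    "(\<forall>f g. in_HL \<omega> p f \<and> in_HL \<omega> p' g \<longrightarrow>
        (\<forall>r\<in>{0..<1}. summable (\<lambda>n. tcoeff f n * cnj (tcoeff g n)
                             * of_real (moment \<omega> (2 * real n + 1)) * of_real r ^ n)) \<and>
        (pair_r \<omega> f g \<longlongrightarrow> pairing \<omega> f g) (at_left 1))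
   \<and> \<comment> \<open>each g induces a bounded functional with norm comparable to the norm of g\<close>
     (\<exists>c C. 0 < c \<and> 0 < C \<and>
        (\<forall>g. in_HL \<omega> p' g \<longrightarrow>
           (\<forall>f. in_HL \<omega> p f \<longrightarrow> norm (pairing \<omega> f g) \<le> C * HL_norm \<omega> p' g * HL_norm \<omega> p f) \<and>
           (\<forall>M. (\<forall>f. in_HL \<omega> p f \<longrightarrow> norm (pairing \<omega> f g) \<le> M * HL_norm \<omega> p f)
                  \<longrightarrow> c * HL_norm \<omega> p' g \<le> M)))
   \<and> \<comment> \<open>every bounded linear functional arises from a unique g\<close>
     (\<forall>L :: (complex \<Rightarrow> complex) \<Rightarrow> complex.
        (\<forall>f h. in_HL \<omega> p f \<and> in_HL \<omega> p h \<longrightarrow> L (\<lambda>z. f z + h z) = L f + L h) \<and>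
        (\<forall>a f. in_HL \<omega> p f \<longrightarrow> L (\<lambda>z. a * f z) = a * L f) \<and>
        (\<exists>M. \<forall>f. in_HL \<omega> p f \<longrightarrow> norm (L f) \<le> M * HL_norm \<omega> p f)
      \<longrightarrow> (\<exists>g. in_HL \<omega> p' g \<and> (\<forall>f. in_HL \<omega> p f \<longrightarrow> L f = pairing \<omega> f g)) \<and>
          (\<forall>g1 g2. in_HL \<omega> p' g1 \<and> in_HL \<omega> p' g2 \<and>
                   (\<forall>f. in_HL \<omega> p f \<longrightarrow> L f = pairing \<omega> f g1) \<and>
                   (\<forall>f. in_HL \<omega> p f \<longrightarrow> L f = pairing \<omega> f g2)
                   \<longrightarrow> (\<forall>z\<in>ball 0 1. g1 z = g2 z)))"
proof -
  interpret HLloc \<omega> p p' using assms by unfold_locales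
  have c1: "\<forall>f g. in_HL \<omega> p f \<and> in_HL \<omega> p' g \<longrightarrow>
        (\<forall>r\<in>{0..<1}. summable (\<lambda>n. tcoeff f n * cnj (tcoeff g n)
                             * of_real (moment \<omega> (2 * real n + 1)) * of_real r ^ n)) \<and>
        (pair_r \<omega> f g \<longlongrightarrow> pairing \<omega> f g) (at_left 1)"
  proof (intro allI impI conjI)
    fix f g assume fg: "in_HL \<omega> p f \<and> in_HL \<omega> p' g"
    then show "\<forall>r\<in>{0..<1}. summable (\<lambda>n. tcoeff f n * cnj (tcoeff g n)
                             * of_real (moment \<omega> (2 * real n + 1)) * of_real r ^ n)"
      using pairing_props(1) by blast
    show "(pair_r \<omega> f g \<longlongrightarrow> pairing \<omega> f g) (at_left 1)"
      using pairing_props(2)[of f g] pairing_props(3)[of f g] fg by simp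
  qed
  have c2: "\<exists>c C. 0 < c \<and> 0 < C \<and>
        (\<forall>g. in_HL \<omega> p' g \<longrightarrow>
           (\<forall>f. in_HL \<omega> p f \<longrightarrow> norm (pairing \<omega> f g) \<le> C * HL_norm \<omega> p' g * HL_norm \<omega> p f) \<and>
           (\<forall>M. (\<forall>f. in_HL \<omega> p f \<longrightarrow> norm (pairing \<omega> f g) \<le> M * HL_norm \<omega> p f)
                  \<longrightarrow> c * HL_norm \<omega> p' g \<le> M))"
  proof -
    have pb: "\<forall>g. in_HL \<omega> p' g \<longrightarrow>
           (\<forall>f. in_HL \<omega> p f \<longrightarrow> norm (pairing \<omega> f g) \<le> K0 * HL_norm \<omega> p' g * HL_norm \<omega> p f) \<and>
           (\<forall>M. (\<forall>f. in_HL \<omega> p f \<longrightarrow> norm (pairing \<omega> f g) \<le> M * HL_norm \<omega> p f)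
                  \<longrightarrow> 1 / K0 * HL_norm \<omega> p' g \<le> M)"
      using pairing_bound lower_bound by blast
    have "0 < 1 / K0" "0 < K0" using K0(1) by auto
    then show ?thesis using pb by blast
  qed
  have c3: "\<forall>L :: (complex \<Rightarrow> complex) \<Rightarrow> complex.
        (\<forall>f h. in_HL \<omega> p f \<and> in_HL \<omega> p h \<longrightarrow> L (\<lambda>z. f z + h z) = L f + L h) \<and>
        (\<forall>a f. in_HL \<omega> p f \<longrightarrow> L (\<lambda>z. a * f z) = a * L f) \<and>
        (\<exists>M. \<forall>f. in_HL \<omega> p f \<longrightarrow> norm (L f) \<le> M * HL_norm \<omega> p f)
      \<longrightarrow> (\<exists>g. in_HL \<omega> p' g \<and> (\<forall>f. in_HL \<omega> p f \<longrightarrow> L f = pairing \<omega> f g)) \<and>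
          (\<forall>g1 g2. in_HL \<omega> p' g1 \<and> in_HL \<omega> p' g2 \<and>
                   (\<forall>f. in_HL \<omega> p f \<longrightarrow> L f = pairing \<omega> f g1) \<and>
                   (\<forall>f. in_HL \<omega> p f \<longrightarrow> L f = pairing \<omega> f g2)
                   \<longrightarrow> (\<forall>z\<in>ball 0 1. g1 z = g2 z))"
  proof (intro allI impI conjI)
    fix L :: "(complex \<Rightarrow> complex) \<Rightarrow> complex"
    assume H: "(\<forall>f h. in_HL \<omega> p f \<and> in_HL \<omega> p h \<longrightarrow> L (\<lambda>z. f z + h z) = L f + L h) \<and>
        (\<forall>a f. in_HL \<omega> p f \<longrightarrow> L (\<lambda>z. a * f z) = a * L f) \<and>
        (\<exists>M. \<forall>f. in_HL \<omega> p f \<longrightarrow> norm (L f) \<le> M * HL_norm \<omega> p f)"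
    then obtain M where M: "\<forall>f. in_HL \<omega> p f \<longrightarrow> norm (L f) \<le> M * HL_norm \<omega> p f" by blast
    show "\<exists>g. in_HL \<omega> p' g \<and> (\<forall>f. in_HL \<omega> p f \<longrightarrow> L f = pairing \<omega> f g)"
      using rep_exists[of L M] H M by blast
  next
    fix L :: "(complex \<Rightarrow> complex) \<Rightarrow> complex" and g1 g2
    assume "in_HL \<omega> p' g1 \<and> in_HL \<omega> p' g2 \<and>
                   (\<forall>f. in_HL \<omega> p f \<longrightarrow> L f = pairing \<omega> f g1) \<and>
                   (\<forall>f. in_HL \<omega> p f \<longrightarrow> L f = pairing \<omega> f g2)"
    then show "\<forall>z\<in>ball 0 1. g1 z = g2 z" using uniq[of g1 g2] by auto
  qed
  show ?thesis using c1 c2 c3 by blast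
qed

end
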